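(* Consider the formal power series in $q$ \[ K(q) = \frac{2 J_{20}^{15} J_{6,20} J_{10,20}}{J_{1,20}^2 J_{2,20} J_{3,20}^3 J_{5,20}^2 J_{7,20}^3 J_{8,20}^2 J_{9,20}^2} + \sum_{n=-\infty}^{\infty} \frac{(-1)^n q^{10n^2+15n+4}}{1+q^{10n+6}}, \] where each summand is expanded as a power series in $q$ (for terms where $m=10n+6<0$, one writes $\frac{1}{1+q^{m}} = \frac{q^{-m}}{1+q^{-m}}$). Then every coefficient of $q^N$, $N\ge 0$, in $K(q)$ is strictly positive.
   Context: Notation: $(a;q)_\infty = \prod_{i\ge 0}(1-aq^i)$ and $(a_1,\dots,a_k;q)_\infty = (a_1;q)_\infty\cdots(a_k;q)_\infty$. For positive integers $a<b$: $J_b = (q^b;q^b)_\infty$ and $J_{a,b} = (q^a, q^{b-a}, q^b; q^b)_\infty$. *)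

theory Defs
  imports "HOL-Computational_Algebra.Formal_Power_Series"
begin

text \<open>Infinite products and bilateral sums of formal power series are understood as limits
  in the standard (subdegree) metric topology on formal power series.\<close>

definition fps_infprod :: "(nat \<Rightarrow> real fps) \<Rightarrow> real fps" where
  "fps_infprod f = lim (\<lambda>n. \<Prod>i<n. f i)"

definition fps_bisum :: "(int \<Rightarrow> real fps) \<Rightarrow> real fps" where
  "fps_bisum f = lim (\<lambda>M. \<Sum>n\<in>{-int M..int M}. f n)"

definition qpoch_mon :: "nat \<Rightarrow> nat \<Rightarrow> real fps" where
  "qpoch_mon k b = fps_infprod (\<lambda>i. 1 - fps_X ^ (k + b * i))"

definition J :: "nat \<Rightarrow> real fps" where
  "J b = qpoch_mon b b"

definition J2 :: "nat \<Rightarrow> nat \<Rightarrow> real fps" where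
  "J2 a b = qpoch_mon a b * qpoch_mon (b - a) b * qpoch_mon b b"

definition K_term :: "int \<Rightarrow> real fps" where
  "K_term n = (let e = 10 * n^2 + 15 * n + 4; m = 10 * n + 6 in
     if m \<ge> 0 then (-1) ^ nat \<bar>n\<bar> * fps_X ^ nat e * inverse (1 + fps_X ^ nat m)
     else (-1) ^ nat \<bar>n\<bar> * fps_X ^ nat (e - m) * inverse (1 + fps_X ^ nat (- m)))"

definition K :: "real fps" where
  "K = fps_const 2 * J 20 ^ 15 * J2 6 20 * J2 10 20 *
       inverse (J2 1 20 ^ 2 * J2 2 20 * J2 3 20 ^ 3 * J2 5 20 ^ 2 * J2 7 20 ^ 3
                * J2 8 20 ^ 2 * J2 9 20 ^ 2)
     + fps_bisum K_term"

end

theory Submission imports Defs begin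
unbundle fps_syntax

definition eqto :: "nat \<Rightarrow> real fps \<Rightarrow> real fps \<Rightarrow> bool" where
  "eqto n f g \<longleftrightarrow> (\<forall>k\<le>n. f $ k = g $ k)"

lemma eqto_refl[simp]: "eqto n f f" by (simp add: eqto_def)
lemma eqto_sym: "eqto n f g \<Longrightarrow> eqto n g f" by (simp add: eqto_def)
lemma eqto_trans: "eqto n f g \<Longrightarrow> eqto n g h \<Longrightarrow> eqto n f h" by (simp add: eqto_def)

lemma eqto_mult: "eqto n a b \<Longrightarrow> eqto n c d \<Longrightarrow> eqto n (a*c) (b*d)"
  unfolding eqto_def fps_mult_nth by (auto intro!: sum.cong)

lemma eqto_add: "eqto n a b \<Longrightarrow> eqto n c d \<Longrightarrow> eqto n (a+c) (b+d)"
  unfolding eqto_def by auto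

lemma eqto_power: "eqto n a b \<Longrightarrow> eqto n (a^m) (b^m)"
  by (induction m) (auto intro: eqto_mult)

lemma eqto_inverse:
  assumes "eqto n a b" "b $ 0 \<noteq> 0"
  shows "eqto n (inverse a) (inverse b)"
proof -
  have a0: "a $ 0 \<noteq> 0" using assms by (auto simp: eqto_def)
  have c: "fps_cutoff (Suc n) a = fps_cutoff (Suc n) b"
    using assms(1) by (auto simp: eqto_def fps_cutoff_eq_fps_cutoff_iff)
  have "fps_cutoff (Suc n) (inverse a) = fps_cutoff (Suc n) (inverse (fps_cutoff (Suc n) a))"
    using fps_cutoff_inverse[OF a0] by simp
  also have "\<dots> = fps_cutoff (Suc n) (inverse b)"
    using c fps_cutoff_inverse[OF assms(2)] by simp
  finally show ?thesis by (auto simp: eqto_def fps_cutoff_eq_fps_cutoff_iff)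
qed

lemma eqto_one_minus: "n < d \<Longrightarrow> eqto n (1 - fps_X ^ d) 1"
  by (auto simp: eqto_def)

lemma eqto_prod_one:
  assumes "\<And>i. i \<in> A \<Longrightarrow> n < d i"
  shows "eqto n (\<Prod>i\<in>A. 1 - fps_X ^ d i) 1"
proof (cases "finite A")
  case True
  then show ?thesis using assms
  proof (induction A rule: finite_induct)
    case (insert x F)
    then show ?case using eqto_mult[OF eqto_one_minus[of n "d x"], of _ 1] by simp
  qed simp
qed simp


lemma lim_nth:
  fixes s :: "nat \<Rightarrow> real fps"
  assumes B: "\<And>n M. B n \<le> M \<Longrightarrow> s M $ n = s (B n) $ n"
  assumes "B n \<le> M"
  shows "lim s $ n = s M $ n"
proof -
  have ev: "eventually (\<lambda>M. s M $ k = Abs_fps (\<lambda>n. s (B n) $ n) $ k) sequentially" for k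
    unfolding eventually_sequentially fps_nth_Abs_fps by (intro exI[of _ "B k"] allI impI B)
  have "s \<longlonglongrightarrow> Abs_fps (\<lambda>n. s (B n) $ n)"
    by (rule tendsto_fpsI) (rule ev)
  then have "lim s = Abs_fps (\<lambda>n. s (B n) $ n)" by (rule limI)
  then show ?thesis using B[OF assms(2)] by (simp del: B)
qed


lemma qpoch_eqto:
  assumes "1 \<le> k" "1 \<le> b" "n < M"
  shows "eqto n (qpoch_mon k b) (\<Prod>i<M. 1 - fps_X ^ (k + b * i))"
proof -
  define s where "s = (\<lambda>M. \<Prod>i<M. (1::real fps) - fps_X ^ (k + b * i))"
  have key0: "eqto n (s (Suc n + d)) (s (Suc n))" for d n
  proof (induction d)
    case (Suc d)
    have "s (Suc n + Suc d) = s (Suc n + d) * (1 - fps_X ^ (k + b * (Suc n + d)))"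
      unfolding s_def by simp
    moreover have "n < k + b * (Suc n + d)"
    proof -
      have "Suc n + d \<le> b * (Suc n + d)" using assms(2) mult_le_mono1[of 1 b "Suc n + d"] by simp
      then show ?thesis by linarith
    qed
    ultimately show ?case using eqto_mult[OF Suc eqto_one_minus] by (metis mult.right_neutral)
  qed simp
  have key: "eqto n (s M') (s (Suc n))" if "Suc n \<le> M'" for M' n
    using key0[of n "M' - Suc n"] that by simp
  have "lim s $ j = s M $ j" if "j \<le> n" for j
  proof (rule lim_nth[of "\<lambda>n. Suc n"])
    fix n' M' :: nat assume "Suc n' \<le> M'"
    then show "s M' $ n' = s (Suc n') $ n'" using key[of n' M'] by (simp add: eqto_def)
  next
    show "Suc j \<le> M" using that assms by simp
  qed
  then have "eqto n (lim s) (s M)" unfolding eqto_def by blast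
  then show ?thesis unfolding qpoch_mon_def fps_infprod_def s_def .
qed


definition geo :: "nat \<Rightarrow> real fps" where
  "geo a = Abs_fps (\<lambda>k. if a dvd k then 1 else 0)"

definition altf :: "nat \<Rightarrow> real fps" where
  "altf a = Abs_fps (\<lambda>k. if a dvd k then (-1) ^ (k div a) else 0)"

lemma mult_1_plus_X: "((1 + fps_X ^ m) * (f::real fps)) $ k = f $ k + (if k < m then 0 else f $ (k - m))"
  by (simp add: ring_distribs fps_X_power_mult_nth)

lemma mult_1_minus_X: "((1 - fps_X ^ m) * (f::real fps)) $ k = f $ k - (if k < m then 0 else f $ (k - m))"
  by (simp add: ring_distribs fps_X_power_mult_nth)

lemma geo_inv: assumes "1 \<le> a" shows "inverse (1 - fps_X ^ a) = geo a"
proof (rule fps_inverse_unique)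
  show "(1 - fps_X ^ a) * geo a = 1"
  proof (rule fps_ext)
    fix k
    show "((1 - fps_X ^ a) * geo a) $ k = (1::real fps) $ k"
    proof (cases "k < a")
      case True
      then show ?thesis using assms by (auto simp: mult_1_minus_X geo_def dvd_imp_le)
    next
      case False
      then have "a dvd (k - a) \<longleftrightarrow> a dvd k" using assms
        by (metis dvd_minus_self not_less)
      then show ?thesis using False assms by (auto simp: mult_1_minus_X geo_def)
    qed
  qed
qed

lemma altf_inv: assumes "1 \<le> a" shows "inverse (1 + fps_X ^ a) = altf a"
proof (rule fps_inverse_unique)
  show "(1 + fps_X ^ a) * altf a = 1"
  proof (rule fps_ext)
    fix k
    show "((1 + fps_X ^ a) * altf a) $ k = (1::real fps) $ k"
    proof (cases "k < a")
      case True
      then show ?thesis using assms by (auto simp: mult_1_plus_X altf_def dvd_imp_le)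
    next
      case False
      then have d: "a dvd (k - a) \<longleftrightarrow> a dvd k" using assms
        by (metis dvd_minus_self not_less)
      show ?thesis
      proof (cases "a dvd k")
        case True
        then obtain q where q: "k = a * q" by blast
        with False assms have "q \<ge> 1" by (cases q) auto
        then have "(k - a) div a = q - 1" "k div a = q" using q assms
          by (simp_all add: diff_mult_distrib2[symmetric, of a q 1, simplified])
        moreover have "(-1::real) ^ q + (-1) ^ (q - 1) = 0" using \<open>q \<ge> 1\<close>
          by (cases q) auto
        ultimately show ?thesis using False assms d True \<open>q \<ge> 1\<close> q
          by (auto simp: mult_1_plus_X altf_def)
      next
        case False2: False
        then show ?thesis using False d assms by (auto simp: mult_1_plus_X altf_def)
      qed
    qed
  qed
qed

lemma altf_bound: "\<bar>altf a $ k\<bar> \<le> 1"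
  by (simp add: altf_def)

lemma neg_one_power_fps: "((-1::real fps) ^ k) = fps_const ((-1) ^ k)"
proof -
  have "(-1::real fps) = fps_const (-1)" by (metis fps_const_neg fps_const_1_eq_1)
  then show ?thesis by (metis fps_const_power)
qed

lemma K_term_nth_bound:
  "\<bar>K_term n $ N\<bar> \<le> (if 3 * \<bar>n\<bar> \<le> int N then 1 else 0)"
proof -
  define e where "e = 10 * n^2 + 15 * n + 4"
  define m where "m = 10 * n + 6"
  have Keq: "K_term n = (if 0 \<le> m then (-1) ^ nat \<bar>n\<bar> * fps_X ^ nat e * inverse (1 + fps_X ^ nat m)
     else (-1) ^ nat \<bar>n\<bar> * fps_X ^ nat (e - m) * inverse (1 + fps_X ^ nat (- m)))"
    unfolding K_term_def Let_def e_def m_def ..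
  obtain E M where EM: "K_term n = fps_const ((-1) ^ nat \<bar>n\<bar>) * (fps_X ^ nat E * altf M)"
     "3 * \<bar>n\<bar> \<le> E"
  proof (cases "0 \<le> m")
    case True
    have n0: "n \<ge> 0" using True by (simp add: m_def)
    have e3: "3 * \<bar>n\<bar> \<le> e" using n0 mult_nonneg_nonneg[OF n0 n0] unfolding e_def
      by (simp add: power2_eq_square)
    have m1: "1 \<le> nat m" using n0 by (simp add: m_def)
    have "K_term n = (-1) ^ nat \<bar>n\<bar> * fps_X ^ nat e * inverse (1 + fps_X ^ nat m)"
      using Keq by (simp only: if_P[OF True])
    also have "\<dots> = fps_const ((-1) ^ nat \<bar>n\<bar>) * (fps_X ^ nat e * altf (nat m))"
      by (simp only: altf_inv[OF m1] neg_one_power_fps mult.assoc)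
    finally show ?thesis using that e3 by blast
  next
    case False
    have n0: "n \<le> -1" using False by (simp add: m_def)
    have e3: "3 * \<bar>n\<bar> \<le> e - m" using n0 mult_nonneg_nonneg[of "-n" "-n-1"] unfolding e_def m_def
      by (simp add: power2_eq_square algebra_simps)
    have m1: "1 \<le> nat (-m)" using n0 by (simp add: m_def)
    have "K_term n = (-1) ^ nat \<bar>n\<bar> * fps_X ^ nat (e - m) * inverse (1 + fps_X ^ nat (- m))"
      using Keq by (simp only: if_not_P[OF False])
    also have "\<dots> = fps_const ((-1) ^ nat \<bar>n\<bar>) * (fps_X ^ nat (e - m) * altf (nat (- m)))"
      by (simp only: altf_inv[OF m1] neg_one_power_fps mult.assoc)
    finally show ?thesis using that e3 by blast
  qed
  have c: "\<bar>(-1::real) ^ nat \<bar>n\<bar>\<bar> = 1" by simp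
  have "K_term n $ N = (-1) ^ nat \<bar>n\<bar> * (if N < nat E then 0 else altf M $ (N - nat E))"
    unfolding EM(1) fps_mult_left_const_nth fps_X_power_mult_nth ..
  then have "\<bar>K_term n $ N\<bar> = (if N < nat E then 0 else \<bar>altf M $ (N - nat E)\<bar>)"
    by (simp add: abs_mult)
  then show ?thesis using EM(2) altf_bound[of M "N - nat E"] by auto
qed


lemma K_term_nth_zero: "int k < 3 * \<bar>n\<bar> \<Longrightarrow> K_term n $ k = 0"
  using K_term_nth_bound[of n k] by auto

lemma Ksum_stable:
  assumes "k \<le> M"
  shows "(\<Sum>n\<in>{-int M..int M}. K_term n) $ k = (\<Sum>n\<in>{-int k..int k}. K_term n) $ k"
proof -
  have "(\<Sum>n\<in>{-int M..int M}. K_term n $ k) = (\<Sum>n\<in>{-int k..int k}. K_term n $ k)"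
  proof (rule sum.mono_neutral_right)
    show "{-int k..int k} \<subseteq> {-int M..int M}" using assms by auto
    show "\<forall>i\<in>{-int M..int M} - {-int k..int k}. K_term i $ k = 0"
      by (auto intro!: K_term_nth_zero)
  qed auto
  then show ?thesis by (simp add: fps_sum_nth)
qed

lemma bisum_eqto: "eqto N (fps_bisum K_term) (\<Sum>n\<in>{-int N..int N}. K_term n)"
proof -
  define s where "s = (\<lambda>M::nat. \<Sum>n\<in>{-int M..int M}. K_term n)"
  have "lim s $ k = s N $ k" if "k \<le> N" for k
  proof (rule lim_nth[of "\<lambda>n. n"])
    fix n M :: nat assume "n \<le> M" then show "s M $ n = s n $ n"
      unfolding s_def by (rule Ksum_stable)
  qed (use that in simp)
  then show ?thesis unfolding eqto_def fps_bisum_def s_def by blast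
qed

lemma Ksum_bound: "\<bar>(\<Sum>n\<in>{-int N..int N}. K_term n) $ N\<bar> \<le> 2 * real (N div 3) + 1"
proof -
  define q where "q = int N div 3"
  have "\<bar>(\<Sum>n\<in>{-int N..int N}. K_term n) $ N\<bar> = \<bar>\<Sum>n\<in>{-int N..int N}. K_term n $ N\<bar>"
    by (simp add: fps_sum_nth)
  also have "\<dots> \<le> (\<Sum>n\<in>{-int N..int N}. \<bar>K_term n $ N\<bar>)" by (rule sum_abs)
  also have "\<dots> \<le> (\<Sum>n\<in>{-int N..int N}. (if 3 * \<bar>n\<bar> \<le> int N then 1 else 0))"
    by (rule sum_mono) (rule K_term_nth_bound)
  also have "\<dots> = (\<Sum>n\<in>{-q..q}. (if 3 * \<bar>n\<bar> \<le> int N then 1 else 0))"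
  proof (rule sum.mono_neutral_right)
    show "{-q..q} \<subseteq> {-int N..int N}" unfolding q_def by auto
    show "\<forall>i\<in>{-int N..int N} - {-q..q}. (if 3 * \<bar>i\<bar> \<le> int N then 1 else 0) = (0::real)"
      unfolding q_def by auto
  qed auto
  also have "\<dots> = (\<Sum>n\<in>{-q..q}. 1)"
    by (rule sum.cong) (auto simp: q_def)
  also have "\<dots> = 2 * real (N div 3) + 1"
  proof -
    have "int N div 3 = int (N div 3)" by (simp add: zdiv_int)
    then show ?thesis unfolding q_def by simp
  qed
  finally show ?thesis .
qed


definition Pm :: "nat \<Rightarrow> nat \<Rightarrow> real fps" where
  "Pm r L = (\<Prod>i<L. 1 - fps_X ^ (r + 20 * i))"

definition Pp :: "nat \<Rightarrow> nat \<Rightarrow> real fps" where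
  "Pp c L = (\<Prod>i<L. (1 + fps_X ^ (c + 20 * i)) * (1 + fps_X ^ (c + 10 + 20 * i)))"

definition G :: "nat \<Rightarrow> nat \<Rightarrow> real fps" where
  "G a b = geo b + fps_X ^ a * geo a"

definition Gp :: "nat \<Rightarrow> nat \<Rightarrow> real fps" where
  "Gp a L = (\<Prod>i<L. G (a + 20 * i) (20 - a + 20 * i) * G (a + 20 * i) (40 - a + 20 * i))"

lemma prod_2L: "(\<Prod>i<2*(L::nat). f i) = (\<Prod>i<L. f (2*i) * (f (2*i+1) :: real fps))"
proof (induction L)
  case (Suc L)
  have "2 * Suc L = Suc (Suc (2 * L))" by simp
  then show ?case using Suc by (simp add: mult.assoc)
qed simp

lemma F1: "1 - fps_X ^ (m + m) = (1 - fps_X ^ m) * (1 + (fps_X ^ m :: real fps))"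
  by (simp add: power_add algebra_simps)

lemma geo_mult: "1 \<le> a \<Longrightarrow> (1 - fps_X ^ a) * geo a = 1"
  using inverse_mult_eq_1'[of "1 - fps_X ^ a :: real fps"] geo_inv[of a] by simp

lemma F2:
  assumes "1 \<le> a" "1 \<le> b"
  shows "1 - fps_X ^ (a + b) = (1 - fps_X ^ a) * (1 - fps_X ^ b) * G a b"
proof -
  have ha: "(1 - fps_X ^ a) * geo a = 1" and hb: "(1 - fps_X ^ b) * geo b = 1"
    using geo_mult assms by auto
  have "(1 - fps_X ^ a) * (1 - fps_X ^ b) * G a b =
     (1 - fps_X ^ a) * ((1 - fps_X ^ b) * geo b) + fps_X ^ a * (1 - fps_X ^ b) * ((1 - fps_X ^ a) * geo a)"
    unfolding G_def by (simp add: algebra_simps)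
  also have "\<dots> = 1 - fps_X ^ a * fps_X ^ b" unfolding ha hb by (simp add: algebra_simps)
  finally show ?thesis by (simp add: power_add)
qed

lemma E_lemma: "Pm (2*c) (2*L) = Pm c L * Pm (c+10) L * Pp c L"
proof -
  have "Pm (2*c) (2*L) = (\<Prod>i<L. (1 - fps_X ^ (2*c + 20 * (2*i))) * (1 - fps_X ^ (2*c + 20 * (2*i+1))))"
    unfolding Pm_def by (rule prod_2L)
  also have "\<dots> = (\<Prod>i<L. (1 - fps_X ^ (c + 20 * i)) * (1 - fps_X ^ (c + 10 + 20 * i)) *
      ((1 + fps_X ^ (c + 20 * i)) * (1 + fps_X ^ (c + 10 + 20 * i))))"
  proof (rule prod.cong)
    fix i
    have e1: "2*c + 20 * (2*i) = (c + 20 * i) + (c + 20 * i)" by simp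
    have e2: "2*c + 20 * (2*i+1) = (c + 10 + 20 * i) + (c + 10 + 20 * i)" by simp
    show "(1 - fps_X ^ (2*c + 20 * (2*i))) * (1 - fps_X ^ (2*c + 20 * (2*i+1))) =
      (1 - fps_X ^ (c + 20 * i)) * (1 - fps_X ^ (c + 10 + 20 * i)) *
      ((1 + fps_X ^ (c + 20 * i)) * (1 + fps_X ^ (c + 10 + 20 * i)) :: real fps)"
      unfolding e1 e2 F1 by (simp add: ac_simps)
  qed simp
  also have "\<dots> = Pm c L * Pm (c+10) L * Pp c L"
    unfolding Pm_def Pp_def prod.distrib by (simp add: ac_simps)
  finally show ?thesis .
qed

lemma shift_lemma: "(\<Prod>i<L. 1 - fps_X ^ (c + 20 + 20 * i)) * (1 - fps_X ^ c) = Pm c L * (1 - (fps_X ^ (c + 20 * L) :: real fps))"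
proof -
  have "Pm c (Suc L) = (1 - fps_X ^ c) * (\<Prod>i<L. 1 - fps_X ^ (c + 20 * Suc i))"
    unfolding Pm_def by (subst prod.lessThan_Suc_shift) simp
  moreover have "Pm c (Suc L) = Pm c L * (1 - fps_X ^ (c + 20 * L))"
    unfolding Pm_def by simp
  moreover have "(\<Prod>i<L. 1 - fps_X ^ (c + 20 * Suc i)) = (\<Prod>i<L. 1 - fps_X ^ (c + 20 + 20 * i) :: real fps)"
    by (simp add: algebra_simps)
  ultimately show ?thesis by (simp add: ac_simps)
qed

lemma G_lemma:
  assumes "1 \<le> a" "a \<le> 19"
  shows "Pm 20 (2*L) * (1 - fps_X ^ (20 - a)) = Pm a L ^ 2 * Pm (20 - a) L ^ 2 * (1 - fps_X ^ (20 - a + 20 * L)) * Gp a L"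
proof -
  have "Pm 20 (2*L) = (\<Prod>i<L. (1 - fps_X ^ (20 + 20 * (2*i))) * (1 - fps_X ^ (20 + 20 * (2*i+1))))"
    unfolding Pm_def by (rule prod_2L)
  also have "\<dots> = (\<Prod>i<L. (1 - fps_X ^ (a + 20 * i)) * (1 - fps_X ^ (a + 20 * i)) * (1 - fps_X ^ (20 - a + 20 * i))
      * (1 - fps_X ^ (20 - a + 20 + 20 * i)) * (G (a + 20 * i) (20 - a + 20 * i) * G (a + 20 * i) (40 - a + 20 * i)))"
  proof (rule prod.cong)
    fix i
    have e1: "20 + 20 * (2*i) = (a + 20 * i) + (20 - a + 20 * i)" using assms by simp
    have e2: "20 + 20 * (2*i+1) = (a + 20 * i) + (40 - a + 20 * i)" using assms by simp
    have e3: "40 - a + 20 * i = 20 - a + 20 + 20 * i" using assms by simp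
    show "((1::real fps) - fps_X ^ (20 + 20 * (2*i))) * (1 - fps_X ^ (20 + 20 * (2*i+1))) =
      (1 - fps_X ^ (a + 20 * i)) * (1 - fps_X ^ (a + 20 * i)) * (1 - fps_X ^ (20 - a + 20 * i))
      * (1 - fps_X ^ (20 - a + 20 + 20 * i)) * (G (a + 20 * i) (20 - a + 20 * i) * G (a + 20 * i) (40 - a + 20 * i))"
      unfolding e1 e2 using assms F2[of "a + 20 * i" "20 - a + 20 * i"] F2[of "a + 20 * i" "40 - a + 20 * i"]
      unfolding e3 by (simp add: ac_simps)
  qed simp
  also have "\<dots> = Pm a L ^ 2 * Pm (20 - a) L * (\<Prod>i<L. 1 - fps_X ^ (20 - a + 20 + 20 * i)) * Gp a L"
    unfolding Pm_def Gp_def prod.distrib power2_eq_square by (simp add: ac_simps)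
  finally have "Pm 20 (2*L) * (1 - fps_X ^ (20 - a)) = Pm a L ^ 2 * Pm (20 - a) L * Gp a L *
     ((\<Prod>i<L. 1 - fps_X ^ (20 - a + 20 + 20 * i)) * (1 - fps_X ^ (20 - a)))"
    by (simp add: ac_simps)
  also have "\<dots> = Pm a L ^ 2 * Pm (20 - a) L ^ 2 * (1 - fps_X ^ (20 - a + 20 * L)) * Gp a L"
    unfolding shift_lemma by (simp add: power2_eq_square ac_simps)
  finally show ?thesis .
qed


definition RR :: "nat \<Rightarrow> real fps" where
  "RR L = Pm 20 (2*L) ^ 2 * Pm 6 (2*L) * Pm 14 (2*L) * Pm 10 (2*L) ^ 2"
definition Du :: "nat \<Rightarrow> real fps" where
  "Du L = Pm 1 L ^ 2 * Pm 19 L ^ 2 * Pm 3 L ^ 3 * Pm 17 L ^ 3 * Pm 13 L * Pm 7 L * Pm 5 L ^ 2 * Pm 15 L ^ 2"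
definition Dl :: "nat \<Rightarrow> real fps" where
  "Dl L = Pm 2 L * Pm 18 L * Pm 13 L ^ 2 * Pm 7 L ^ 2 * Pm 8 L ^ 2 * Pm 12 L ^ 2 * Pm 9 L ^ 2 * Pm 11 L ^ 2"
definition QQ :: "nat \<Rightarrow> real fps" where
  "QQ L = Gp 1 L * Gp 3 L * Pp 3 L * Pp 7 L * Pp 5 L ^ 2"

lemma key_identity:
  "RR L * ((1 - fps_X ^ 19) * (1 - fps_X ^ 17)) =
   Du L * ((1 - fps_X ^ (19 + 20 * L)) * (1 - fps_X ^ (17 + 20 * L))) * QQ L"
proof -
  have g1: "Pm 20 (2*L) * (1 - fps_X ^ 19) = Pm 1 L ^ 2 * Pm 19 L ^ 2 * (1 - fps_X ^ (19 + 20 * L)) * Gp 1 L"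
    using G_lemma[of 1 L] by simp
  have g3: "Pm 20 (2*L) * (1 - fps_X ^ 17) = Pm 3 L ^ 2 * Pm 17 L ^ 2 * (1 - fps_X ^ (17 + 20 * L)) * Gp 3 L"
    using G_lemma[of 3 L] by simp
  have e3: "Pm 6 (2*L) = Pm 3 L * Pm 13 L * Pp 3 L" using E_lemma[of 3 L] by simp
  have e7: "Pm 14 (2*L) = Pm 7 L * Pm 17 L * Pp 7 L" using E_lemma[of 7 L] by simp
  have e5: "Pm 10 (2*L) = Pm 5 L * Pm 15 L * Pp 5 L" using E_lemma[of 5 L] by simp
  have "RR L * ((1 - fps_X ^ 19) * (1 - fps_X ^ 17)) =
     (Pm 20 (2*L) * (1 - fps_X ^ 19)) * (Pm 20 (2*L) * (1 - fps_X ^ 17)) * Pm 6 (2*L) * Pm 14 (2*L) * Pm 10 (2*L) ^ 2"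
    unfolding RR_def by (simp only: power2_eq_square ac_simps)
  also have "\<dots> = Du L * ((1 - fps_X ^ (19 + 20 * L)) * (1 - fps_X ^ (17 + 20 * L))) * QQ L"
    unfolding g1 g3 e3 e7 e5 Du_def QQ_def by (simp only: power2_eq_square power3_eq_cube ac_simps)
  finally show ?thesis .
qed

definition good :: "real fps \<Rightarrow> bool" where
  "good f \<longleftrightarrow> (\<forall>n. 0 \<le> f $ n) \<and> 1 \<le> f $ 0"

lemma good_mult: "good f \<Longrightarrow> good g \<Longrightarrow> good (f * g)"
  unfolding good_def fps_mult_nth
  by (auto intro!: sum_nonneg mult_nonneg_nonneg) (metis mult_mono' mult_1 zero_le_one)

lemma good_one: "good 1" by (simp add: good_def)

lemma good_prod: "(\<And>i. i \<in> A \<Longrightarrow> good (f i)) \<Longrightarrow> good (\<Prod>i\<in>A. f i)"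
proof (induction A rule: infinite_finite_induct)
  case (insert x F) then show ?case by (simp add: good_mult)
qed (auto simp: good_one)

lemma good_power: "good f \<Longrightarrow> good (f ^ n)"
  by (induction n) (auto simp: good_one good_mult)

lemma good_geo: "good (geo a)" by (simp add: good_def geo_def)

lemma good_1plus: "1 \<le> a \<Longrightarrow> good (1 + fps_X ^ a)" by (simp add: good_def)

lemma good_G: "1 \<le> a \<Longrightarrow> good (G a b)"
  by (simp add: good_def G_def fps_X_power_mult_nth geo_def)

lemma good_Pp: "1 \<le> c \<Longrightarrow> good (Pp c L)"
  unfolding Pp_def by (intro good_prod good_mult good_1plus) auto

lemma good_Gp: "1 \<le> a \<Longrightarrow> good (Gp a L)"
  unfolding Gp_def by (intro good_prod good_mult good_G) auto

lemma Pm_inverse: "1 \<le> r \<Longrightarrow> inverse (Pm r L) = (\<Prod>i<L. geo (r + 20 * i))"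
proof (induction L)
  case 0 then show ?case by (simp add: Pm_def)
next
  case (Suc L)
  have "inverse (Pm r (Suc L)) = inverse (Pm r L) * inverse (1 - fps_X ^ (r + 20 * L))"
    unfolding Pm_def by (simp add: fps_inverse_mult)
  then show ?case using Suc geo_inv[of "r + 20 * L"] by simp
qed

lemma good_Pm_inverse: "1 \<le> r \<Longrightarrow> good (inverse (Pm r L))"
  by (simp add: Pm_inverse good_prod good_geo)

lemma dominance: "good g \<Longrightarrow> (\<forall>n. 0 \<le> f $ n) \<Longrightarrow> f $ n \<le> (f * g) $ n"
proof -
  assume g: "good g" and f: "\<forall>n. 0 \<le> f $ n"
  have "f $ n \<le> f $ n * g $ (n - n)" using g f mult_left_mono[of 1 "g $ 0" "f $ n"] by (simp add: good_def)
  also have "\<dots> \<le> (\<Sum>i=0..n. f $ i * g $ (n - i))"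
    by (rule member_le_sum[of n "{0..n}" "\<lambda>i. f $ i * g $ (n - i)"]) (use f g in \<open>auto simp: good_def\<close>)
  finally show ?thesis by (simp add: fps_mult_nth)
qed

lemma G119_ge1: "1 \<le> G 1 19 $ j"
  by (cases j) (auto simp: G_def geo_def fps_X_power_mult_nth)

lemma sum_even: "(\<Sum>i=0..N. (if 2 dvd i then 1 else 0 :: real)) = real (N div 2 + 1)"
  by (induction N) (auto simp: odd_Suc_div_two)

lemma base_bound: "real (N div 2 + 1) \<le> (geo 2 * G 1 19) $ N"
proof -
  have "(\<Sum>i=0..N. (if 2 dvd i then 1 else 0 :: real)) \<le> (\<Sum>i=0..N. geo 2 $ i * G 1 19 $ (N - i))"
    by (rule sum_mono) (use G119_ge1 in \<open>auto simp: geo_def\<close>)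
  then show ?thesis by (simp add: sum_even fps_mult_nth)
qed


lemma Pm_0: "1 \<le> r \<Longrightarrow> Pm r L $ 0 = 1"
  unfolding Pm_def by (induction L) auto

lemma power_nth_0: "((f::real fps) ^ n) $ 0 = (f $ 0) ^ n"
  by (induction n) auto

lemma prod_part_bound:
  assumes L: "L = Suc N"
  shows "real (N div 2 + 1) \<le> (RR L * inverse (Du L * Dl L)) $ N"
proof -
  define w0 :: "real fps" where "w0 = (1 - fps_X ^ 19) * (1 - fps_X ^ 17)"
  define wL :: "real fps" where "wL = (1 - fps_X ^ (19 + 20 * L)) * (1 - fps_X ^ (17 + 20 * L))"
  have w00: "w0 $ 0 = 1" by (simp add: w0_def)
  have Du0: "Du L $ 0 = 1" by (simp add: Du_def Pm_0 power_nth_0)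
  have h1: "w0 * inverse w0 = 1" using inverse_mult_eq_1'[of w0] w00 by simp
  have h2: "Du L * inverse (Du L) = 1" using inverse_mult_eq_1'[of "Du L"] Du0 by simp
  have key: "RR L * w0 = Du L * wL * QQ L" using key_identity[of L] unfolding w0_def wL_def .
  have "RR L * inverse (Du L * Dl L) = RR L * (w0 * inverse w0) * inverse (Du L) * inverse (Dl L)"
    by (simp add: fps_inverse_mult h1 mult.assoc)
  also have "\<dots> = (RR L * w0) * inverse w0 * inverse (Du L) * inverse (Dl L)"
    by (simp add: mult.assoc)
  also have "\<dots> = (Du L * inverse (Du L)) * wL * (QQ L * inverse w0 * inverse (Dl L))"
    unfolding key by (simp add: ac_simps)
  finally have eq: "RR L * inverse (Du L * Dl L) = wL * (QQ L * inverse w0 * inverse (Dl L))"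
    using h2 by simp
  have wLe: "eqto N wL 1" unfolding wL_def
    using eqto_mult[OF eqto_one_minus[of N "19 + 20 * L"] eqto_one_minus[of N "17 + 20 * L"]] L by simp
  define Z where "Z = QQ L * inverse w0 * inverse (Dl L)"
  have "(RR L * inverse (Du L * Dl L)) $ N = Z $ N"
    using eqto_mult[OF wLe eqto_refl[of N Z]] unfolding eq Z_def eqto_def by simp
  define tG where "tG = (\<Prod>i<N. G (1 + 20 * Suc i) (20 - 1 + 20 * Suc i) * G (1 + 20 * Suc i) (40 - 1 + 20 * Suc i))"
  define t2 where "t2 = (\<Prod>i<N. geo (2 + 20 * Suc i))"
  have gp1: "Gp 1 L = (G 1 19 * G 1 39) * tG"
    unfolding Gp_def L tG_def by (subst prod.lessThan_Suc_shift) simp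
  have "inverse (Pm 2 L) = (\<Prod>i<Suc N. geo (2 + 20 * i))" using Pm_inverse[of 2 L] L by simp
  also have "\<dots> = geo 2 * t2" unfolding t2_def by (subst prod.lessThan_Suc_shift) simp
  finally have ip2: "inverse (Pm 2 L) = geo 2 * t2" .
  have iw0: "inverse w0 = geo 19 * geo 17"
    unfolding w0_def fps_inverse_mult using geo_inv[of 19] geo_inv[of 17] by simp
  have iDl: "inverse (Dl L) = inverse (Pm 2 L) * inverse (Pm 18 L) * inverse (Pm 13 L) ^ 2 * inverse (Pm 7 L) ^ 2
      * inverse (Pm 8 L) ^ 2 * inverse (Pm 12 L) ^ 2 * inverse (Pm 9 L) ^ 2 * inverse (Pm 11 L) ^ 2"
    unfolding Dl_def by (simp only: fps_inverse_mult fps_inverse_power)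
  define W where "W = G 1 39 * tG * Gp 3 L * Pp 3 L * Pp 7 L * Pp 5 L ^ 2 * (geo 19 * geo 17) *
      t2 * inverse (Pm 18 L) * inverse (Pm 13 L) ^ 2 * inverse (Pm 7 L) ^ 2
      * inverse (Pm 8 L) ^ 2 * inverse (Pm 12 L) ^ 2 * inverse (Pm 9 L) ^ 2 * inverse (Pm 11 L) ^ 2"
  have ZW: "Z = (geo 2 * G 1 19) * W"
    unfolding Z_def QQ_def W_def gp1 iw0 iDl ip2 by (simp only: ac_simps)
  have gW: "good W"
    unfolding W_def tG_def t2_def
    by (intro good_mult good_power good_Pm_inverse good_Gp good_Pp good_G good_geo good_prod) auto
  have nn: "\<forall>n. 0 \<le> (geo 2 * G 1 19) $ n"
    using good_mult[OF good_geo good_G[of 1 19]] by (simp add: good_def)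
  have "real (N div 2 + 1) \<le> (geo 2 * G 1 19) $ N" by (rule base_bound)
  also have "\<dots> \<le> Z $ N" unfolding ZW by (rule dominance[OF gW nn])
  finally show ?thesis using \<open>(RR L * inverse (Du L * Dl L)) $ N = Z $ N\<close> by simp
qed


definition Qf :: "nat \<Rightarrow> nat \<Rightarrow> real fps" where
  "Qf L k = Pm k (if k = 20 \<or> k = 6 \<or> k = 14 \<or> k = 10 then 2 * L else L)"

definition J2f :: "nat \<Rightarrow> nat \<Rightarrow> real fps" where
  "J2f L a = Qf L a * Qf L (20 - a) * Qf L 20"

lemma Qf_eqto: "1 \<le> k \<Longrightarrow> N < L \<Longrightarrow> eqto N (qpoch_mon k 20) (Qf L k)"
  unfolding Qf_def Pm_def by (rule qpoch_eqto) auto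

lemma K_eqto:
  assumes "N < L"
  shows "eqto N K (fps_const 2 * Qf L 20 ^ 15 * J2f L 6 * J2f L 10 *
       inverse (J2f L 1 ^ 2 * J2f L 2 * J2f L 3 ^ 3 * J2f L 5 ^ 2 * J2f L 7 ^ 3
                * J2f L 8 ^ 2 * J2f L 9 ^ 2) + (\<Sum>n\<in>{-int N..int N}. K_term n))"
proof -
  have j: "eqto N (J2 a 20) (J2f L a)" if "1 \<le> a" "a < 20" for a
    unfolding J2_def J2f_def using that assms by (intro eqto_mult Qf_eqto) auto
  have jj: "eqto N (J 20) (Qf L 20)" unfolding J_def using assms by (rule Qf_eqto[rotated]) simp
  have d0: "(J2f L 1 ^ 2 * J2f L 2 * J2f L 3 ^ 3 * J2f L 5 ^ 2 * J2f L 7 ^ 3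
                * J2f L 8 ^ 2 * J2f L 9 ^ 2) $ 0 \<noteq> 0"
    by (simp add: J2f_def Qf_def Pm_0 power_nth_0)
  show ?thesis unfolding K_def
    by (intro eqto_add eqto_mult eqto_power eqto_inverse jj j bisum_eqto eqto_refl d0) auto
qed

lemma Kfin_prod:
  "fps_const 2 * Qf L 20 ^ 15 * J2f L 6 * J2f L 10 *
       inverse (J2f L 1 ^ 2 * J2f L 2 * J2f L 3 ^ 3 * J2f L 5 ^ 2 * J2f L 7 ^ 3
                * J2f L 8 ^ 2 * J2f L 9 ^ 2) = fps_const 2 * (RR L * inverse (Du L * Dl L))"
proof -
  define T where "T = Pm 20 (2 * L) ^ 15"
  have num: "Qf L 20 ^ 15 * J2f L 6 * J2f L 10 = T * RR L"
    unfolding T_def J2f_def Qf_def RR_def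
    by (simp add: eval_nat_numeral power_Suc ac_simps del: power_Suc0_right)
  have den: "J2f L 1 ^ 2 * J2f L 2 * J2f L 3 ^ 3 * J2f L 5 ^ 2 * J2f L 7 ^ 3
                * J2f L 8 ^ 2 * J2f L 9 ^ 2 = T * (Du L * Dl L)"
    unfolding T_def J2f_def Qf_def Du_def Dl_def
    by (simp add: eval_nat_numeral power_Suc ac_simps del: power_Suc0_right)
  have T0: "T $ 0 = 1" by (simp add: T_def Pm_0 power_nth_0)
  have hT: "T * inverse T = 1" using inverse_mult_eq_1'[of T] T0 by simp
  have "fps_const 2 * Qf L 20 ^ 15 * J2f L 6 * J2f L 10 *
       inverse (J2f L 1 ^ 2 * J2f L 2 * J2f L 3 ^ 3 * J2f L 5 ^ 2 * J2f L 7 ^ 3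
                * J2f L 8 ^ 2 * J2f L 9 ^ 2) = fps_const 2 * (Qf L 20 ^ 15 * J2f L 6 * J2f L 10) *
       inverse (J2f L 1 ^ 2 * J2f L 2 * J2f L 3 ^ 3 * J2f L 5 ^ 2 * J2f L 7 ^ 3
                * J2f L 8 ^ 2 * J2f L 9 ^ 2)" by (simp only: mult.assoc)
  also have "\<dots> = fps_const 2 * (T * RR L) * (inverse T * inverse (Du L * Dl L))"
    unfolding num den fps_inverse_mult[of T] ..
  also have "\<dots> = fps_const 2 * (T * inverse T) * (RR L * inverse (Du L * Dl L))"
    by (simp only: ac_simps)
  finally show ?thesis using hT by simp
qed

theorem mainTheorem8:
  shows "\<forall>N::nat. fps_nth K N > 0"
proof
  fix N :: nat
  define L where "L = Suc N"
  have e: "K $ N = (fps_const 2 * (RR L * inverse (Du L * Dl L)) + (\<Sum>n\<in>{-int N..int N}. K_term n)) $ N"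
    using K_eqto[of N L] unfolding Kfin_prod L_def eqto_def by simp
  have p: "real (N div 2 + 1) \<le> (RR L * inverse (Du L * Dl L)) $ N"
    by (rule prod_part_bound) (simp add: L_def)
  have s: "\<bar>(\<Sum>n\<in>{-int N..int N}. K_term n) $ N\<bar> \<le> 2 * real (N div 3) + 1" by (rule Ksum_bound)
  have "N div 3 \<le> N div 2" by (rule div_le_mono2) auto
  then have "real (N div 3) \<le> real (N div 2)" by simp
  then show "K $ N > 0" using e p s by simp
qed

end
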